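(* A (closed linear) subspace $X$ of $C([0,\omega_1])$ is separable if and only if there is a countable ordinal $\sigma$ such that $X$ is contained in the range of the projection $\widetilde{P}_\sigma$.
   Context: $\omega_1$ is the first uncountable ordinal; $[0,\omega_1]$ has the order topology and $C([0,\omega_1])$ is the Banach space of continuous scalar-valued functions with sup norm. For a countable ordinal $\sigma$, $\widetilde{P}_\sigma$ is the operator on $C([0,\omega_1])$ given by $\widetilde{P}_\sigma f=f\cdot\mathbf{1}_{[0,\sigma]}+f(\omega_1)\mathbf{1}_{[\sigma+1,\omega_1]}$. *)

theory Defs
  imports "HOL-Analysis.Analysis"
begin

text \<open>The interval [0,omega_1] is modelled by a type 'a of class wellorder with the
order topology (linorder_topology) having a greatest element om such that
every proper initial segment {..<x} (x < om) is countable while {..<om} is not.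
This characterises omega_1 + 1 up to order isomorphism.\<close>

definition omega1_plus_one :: "'a::{wellorder,linorder_topology} \<Rightarrow> bool" where
  "omega1_plus_one om \<longleftrightarrow> (\<forall>x. x \<le> om) \<and> (\<forall>x<om. countable {..<x}) \<and> \<not> countable {..<om}"

definition Ptilde :: "'a::{wellorder,linorder_topology} \<Rightarrow> 'a \<Rightarrow> ('a \<Rightarrow>\<^sub>C 'b::real_normed_field) \<Rightarrow> ('a \<Rightarrow>\<^sub>C 'b)" where
  "Ptilde om \<sigma> f = Bcontfun (\<lambda>x. if x \<le> \<sigma> then apply_bcontfun f x else apply_bcontfun f om)"

definition separable_set :: "'b::metric_space set \<Rightarrow> bool" where
  "separable_set X \<longleftrightarrow> (\<exists>D. countable D \<and> D \<subseteq> X \<and> X \<subseteq> closure D)"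

end

theory Submission
  imports Defs "HOL-Computational_Algebra.Fundamental_Theorem_Algebra"
begin


definition evp :: "real poly \<Rightarrow> 'c::{real_algebra_1,comm_ring_1} \<Rightarrow> 'c" where
  "evp p x = poly (map_poly of_real p) x"

lemma mp_add: "map_poly (of_real::real\<Rightarrow>'c::{real_algebra_1,comm_ring_1}) (p + q) = map_poly of_real p + map_poly of_real q"
  by (intro poly_eqI) (simp add: coeff_map_poly)

lemma mp_mult: "map_poly (of_real::real\<Rightarrow>'c::{real_algebra_1,comm_ring_1}) (p * q) = map_poly of_real p * map_poly of_real q"
proof (induction p rule: pCons_induct)
  case 0 then show ?case by simp
next
  case (pCons a p)
  then show ?case
    by (simp add: mp_add map_poly_pCons map_poly_smult)
qed

lemma evp_mult [simp]: "evp (p * q) x = evp p x * evp q x"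
  by (simp add: evp_def mp_mult)
lemma evp_add [simp]: "evp (p + q) x = evp p x + evp q x"
  by (simp add: evp_def mp_add)
lemma evp_pCons [simp]: "evp (pCons a p) x = of_real a + x * evp p x"
  by (simp add: evp_def map_poly_pCons)
lemma evp_0 [simp]: "evp 0 x = 0"
  by (simp add: evp_def)
lemma evp_1 [simp]: "evp 1 x = 1"
  by (simp add: evp_def)
lemma evp_power [simp]: "evp (p ^ n) x = evp p x ^ n"
  by (induction n) auto
lemma evp_diff [simp]: "evp (p - q) x = evp p x - evp q x"
  by (metis add_diff_cancel evp_add diff_add_cancel)
lemma evp_of_real: "evp p (of_real r) = of_real (poly p r)"
  by (induction p rule: pCons_induct) auto

lemma evp_smult [simp]: "evp (smult a p) x = of_real a * evp p x"
  by (induction p rule: pCons_induct) (auto simp: algebra_simps)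

lemma evp_const [simp]: "evp [:c:] x = of_real c"
  by simp

lemma factor_nonreal:
  fixes P :: "real poly" and w :: complex
  assumes "evp P w = 0" "Im w \<noteq> 0"
  shows "\<exists>b c R. P = [:c, b, 1:] * R"
proof -
  define Q where "Q = [:Re w * Re w + Im w * Im w, -2 * Re w, 1:]"
  have Q0: "evp Q w = 0"
    by (simp add: Q_def complex_eq_iff algebra_simps power2_eq_square)
  have Qn: "Q \<noteq> 0" by (simp add: Q_def)
  define r where "r = P mod Q"
  have eq: "P = Q * (P div Q) + r" by (simp add: r_def)
  have "evp r w = 0"
    using assms(1) Q0 eq by (metis add_0 evp_add evp_mult mult_zero_left)
  have dQ: "degree Q = 2" by (simp add: Q_def)
  have "r = 0 \<or> degree r < 2"
    using degree_mod_less[of Q P] Qn dQ unfolding r_def by auto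
  then have "degree r \<le> 1" by auto
  then have rr: "r = [:coeff r 0, coeff r 1:]"
    by (intro poly_eqI) (auto simp: coeff_pCons coeff_eq_0 split: nat.splits)
  have "evp [:coeff r 0, coeff r 1:] w = 0" using \<open>evp r w = 0\<close> rr by simp
  then have "of_real (coeff r 0) + w * of_real (coeff r 1) = (0::complex)" by simp
  then have "coeff r 0 + Re w * coeff r 1 = 0" "Im w * coeff r 1 = 0"
    by (auto simp: complex_eq_iff)
  then have "coeff r 1 = 0" "coeff r 0 = 0" using assms(2) by auto
  then have "r = 0" using rr by simp
  then have "P = Q * (P div Q)" using eq by simp
  then show ?thesis unfolding Q_def by blast
qed

lemma exists_root:
  fixes P :: "real poly"
  assumes "degree P > 0"
  shows "\<exists>w::complex. evp P w = 0"
proof -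
  have "degree (map_poly (of_real :: real \<Rightarrow> complex) P) = degree P"
    by (rule degree_map_poly) simp
  then have "\<not> constant (poly (map_poly (of_real :: real \<Rightarrow> complex) P))"
    using assms by (simp add: constant_degree)
  then show ?thesis using fundamental_theorem_of_algebra unfolding evp_def by blast
qed

lemma factor_quadratic:
  fixes P :: "real poly"
  assumes "degree P \<ge> 2"
  shows "\<exists>b c R. P = [:c, b, 1:] * R"
proof (cases "\<exists>w::complex. evp P w = 0 \<and> Im w \<noteq> 0")
  case True
  then show ?thesis using factor_nonreal by blast
next
  case False
  obtain w :: complex where w: "evp P w = 0" using exists_root assms by fastforce
  with False have "w = of_real (Re w)" by (simp add: complex_eq_iff)
  then have "poly P (Re w) = 0" using w by (metis evp_of_real of_real_eq_0_iff)
  then obtain P1 where P1: "P = [:- Re w, 1:] * P1" using poly_eq_0_iff_dvd by blast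
  then have "P1 \<noteq> 0" using assms by auto
  then have "degree P = Suc (degree P1)" unfolding P1 by (subst degree_mult_eq) auto
  then obtain w' :: complex where w': "evp P1 w' = 0" using exists_root assms by fastforce
  then have "evp P w' = 0" using P1 by simp
  with False have "w' = of_real (Re w')" by (simp add: complex_eq_iff)
  then have "poly P1 (Re w') = 0" using w' by (metis evp_of_real of_real_eq_0_iff)
  then obtain P2 where P2: "P1 = [:- Re w', 1:] * P2" using poly_eq_0_iff_dvd by blast
  have "[:- Re w, 1:] * [:- Re w', 1:] = [:Re w * Re w', - Re w - Re w', 1:]"
    by (simp add: algebra_simps)
  then have "P = [:Re w * Re w', - Re w - Re w', 1:] * P2"
    using P1 P2 by (metis mult.assoc)
  then show ?thesis by blast
qed

lemma monic_bound:
  fixes \<xi> :: "'b::real_normed_field"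
  assumes m: "\<And>b c. m \<le> norm (evp [:c, b, 1:] \<xi>)" and m0: "m \<ge> 0"
  shows "lead_coeff P = 1 \<Longrightarrow> degree P = 2 * k \<Longrightarrow> m ^ k \<le> norm (evp P \<xi>)"
proof (induction k arbitrary: P)
  case 0
  have "P = 1"
  proof (rule poly_eqI)
    fix n show "coeff P n = coeff 1 n"
      using 0 by (cases n) (auto simp: coeff_eq_0)
  qed
  then show ?case by simp
next
  case (Suc k)
  have "degree P \<ge> 2" using Suc.prems by simp
  then obtain b c R where PR: "P = [:c, b, 1:] * R" using factor_quadratic by blast
  have R0: "R \<noteq> 0" using PR Suc.prems by auto
  have "degree P = 2 + degree R" unfolding PR by (subst degree_mult_eq) (use R0 in auto)
  then have dR: "degree R = 2 * k" using Suc.prems by simp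
  have "lead_coeff P = lead_coeff R" unfolding PR lead_coeff_mult by simp
  then have "m ^ k \<le> norm (evp R \<xi>)" using Suc.IH dR Suc.prems by simp
  then have "m * m ^ k \<le> norm (evp [:c, b, 1:] \<xi>) * norm (evp R \<xi>)"
    using m[of c b] m0 by (intro mult_mono) auto
  moreover have "norm (evp P \<xi>) = norm (evp [:c, b, 1:] \<xi>) * norm (evp R \<xi>)"
    by (simp only: PR evp_mult norm_mult)
  ultimately show ?case by simp
qed

lemma step_bound:
  fixes \<xi> :: "'b::real_normed_field"
  assumes m: "\<And>b c. m \<le> norm (evp [:c, b, 1:] \<xi>)"
    and q0: "norm (evp [:c0, b0, 1:] \<xi>) = m" and mpos: "m > 0" and e: "0 < \<epsilon>"
  shows "norm (evp [:c0 + \<epsilon>, b0, 1:] \<xi>) \<le> m + m * (\<epsilon> / m) ^ Suc (2 * j)"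
proof -
  define n where "n = Suc (2 * j)"
  define p0 :: "real poly" where "p0 = [:c0, b0, 1:]"
  define p1 :: "real poly" where "p1 = [:c0 + \<epsilon>, b0, 1:]"
  define e :: "real poly" where "e = [:- \<epsilon>:]"
  define S where "S = (\<Sum>i<n. e ^ (n - Suc i) * p0 ^ i)"
  define L where "L = p0 ^ n - e ^ n"
  have "p0 - e = p1" by (simp add: p0_def p1_def e_def)
  then have LS: "L = p1 * S" unfolding L_def S_def by (simp add: power_diff_sumr2)
  have p0n: "p0 \<noteq> 0" by (simp add: p0_def)
  have dp0: "degree (p0 ^ n) = 2 * n" using p0n by (simp add: degree_power_eq p0_def)
  have lp0: "lead_coeff (p0 ^ n) = 1" by (simp add: lead_coeff_power p0_def)
  have de: "degree (e ^ n) = 0" by (simp add: e_def poly_const_pow)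
  have LL: "L = p0 ^ n + - (e ^ n)" by (simp add: L_def)
  have dL: "degree L = 2 * n" unfolding LL using dp0 de n_def by (subst degree_add_eq_left) auto
  have lL: "lead_coeff L = 1" unfolding LL using dp0 de lp0 n_def
    by (metis degree_add_eq_left degree_minus zero_less_Suc mult_pos_pos zero_less_numeral coeff_add coeff_minus
        coeff_eq_0 add_0_right minus_zero lessI)
  have S0: "S \<noteq> 0" using LS lL by auto
  have p1n: "p1 \<noteq> 0" by (simp add: p1_def)
  have "degree L = 2 + degree S" unfolding LS using S0 p1n by (subst degree_mult_eq) (auto simp: p1_def)
  then have dS: "degree S = 2 * (2 * j)" using dL n_def by simp
  have "lead_coeff L = lead_coeff S" unfolding LS lead_coeff_mult by (simp add: p1_def)
  then have lS: "lead_coeff S = 1" using lL by simp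
  have mS: "m ^ (2 * j) \<le> norm (evp S \<xi>)"
    using monic_bound[OF m _ lS dS] mpos by simp
  have "evp e \<xi> = - of_real \<epsilon>" by (simp add: e_def)
  then have "norm (evp L \<xi>) \<le> norm (evp p0 \<xi>) ^ n + \<epsilon> ^ n"
  proof -
    have "evp L \<xi> = evp p0 \<xi> ^ n - (- of_real \<epsilon>) ^ n"
      unfolding L_def using \<open>evp e \<xi> = - of_real \<epsilon>\<close> by simp
    also have "norm \<dots> \<le> norm (evp p0 \<xi> ^ n) + norm ((- of_real \<epsilon> :: 'b) ^ n)"
      by (rule norm_triangle_ineq4)
    also have "\<dots> = norm (evp p0 \<xi>) ^ n + \<epsilon> ^ n"
      using e by (simp add: norm_power)
    finally show ?thesis .
  qed
  also have "\<dots> = m ^ (2 * j) * m + \<epsilon> ^ n" using q0 by (simp add: p0_def n_def)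
  finally have A: "norm (evp L \<xi>) \<le> m ^ (2 * j) * m + \<epsilon> ^ n" .
  have "norm (evp L \<xi>) = norm (evp p1 \<xi>) * norm (evp S \<xi>)" by (simp only: LS evp_mult norm_mult)
  then have "m ^ (2 * j) * norm (evp p1 \<xi>) \<le> m ^ (2 * j) * m + \<epsilon> ^ n"
    using A mS by (smt (verit, ccfv_SIG) mult.commute mult_right_mono norm_ge_zero)
  then have "norm (evp p1 \<xi>) \<le> m + \<epsilon> ^ n / m ^ (2 * j)"
    using mpos by (simp add: field_simps)
  also have "\<epsilon> ^ n / m ^ (2 * j) = m * (\<epsilon> / m) ^ n"
    using mpos by (simp add: n_def power_divide field_simps)
  finally show ?thesis by (simp add: p1_def n_def)
qed

lemma le_limit_aux:
  fixes x m r :: real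
  assumes "\<And>j. x \<le> m + m * r ^ Suc (2 * j)" "0 \<le> r" "r < 1" "m > 0"
  shows "x \<le> m"
proof (rule ccontr)
  assume "\<not> x \<le> m"
  then have "(x - m) / m > 0" using assms by simp
  then obtain j where j: "r ^ j < (x - m) / m" using real_arch_pow_inv assms by blast
  have "r ^ Suc (2 * j) \<le> r ^ j" using assms by (intro power_decreasing) auto
  then have "m * r ^ Suc (2 * j) < x - m" using j assms
    by (smt (verit, best) mult_left_mono pos_less_divide_eq mult.commute)
  then show False using assms(1)[of j] by simp
qed

lemma min_zero:
  fixes \<xi> :: "'b::real_normed_field"
  assumes m: "\<And>b c. m \<le> norm (evp [:c, b, 1:] \<xi>)"
    and q0: "norm (evp [:c0, b0, 1:] \<xi>) = m"
  shows "m = 0"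
proof (rule ccontr)
  assume "m \<noteq> 0"
  then have mpos: "m > 0" using q0 norm_ge_zero by (metis less_eq_real_def)
  define \<epsilon> where "\<epsilon> = m / 2"
  have epos: "\<epsilon> > 0" using mpos by (simp add: \<epsilon>_def)
  have k: "norm (evp [:c0 + of_nat k * \<epsilon>, b0, 1:] \<xi>) = m" for k
  proof (induction k)
    case 0 then show ?case using q0 by simp
  next
    case (Suc k)
    have "norm (evp [:(c0 + of_nat k * \<epsilon>) + \<epsilon>, b0, 1:] \<xi>) \<le> m"
    proof (rule le_limit_aux)
      show "norm (evp [:(c0 + of_nat k * \<epsilon>) + \<epsilon>, b0, 1:] \<xi>) \<le> m + m * (\<epsilon> / m) ^ Suc (2 * j)" for j
        by (rule step_bound[OF m Suc.IH mpos epos])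
    qed (use mpos in \<open>auto simp: \<epsilon>_def\<close>)
    moreover have "c0 + of_nat k * \<epsilon> + \<epsilon> = c0 + of_nat (Suc k) * \<epsilon>" by (simp add: algebra_simps)
    ultimately show ?case using m[of "c0 + of_nat (Suc k) * \<epsilon>" b0] by (metis antisym)
  qed
  obtain k :: nat where kk: "of_nat k * \<epsilon> > 3 * m" using reals_Archimedean3[OF epos] by blast
  have "evp [:c0 + of_nat k * \<epsilon>, b0, 1:] \<xi> = evp [:c0, b0, 1:] \<xi> + of_real (of_nat k * \<epsilon>)"
    by (simp add: algebra_simps)
  note this_eq = this
  have nk: "norm (of_real (of_nat k * \<epsilon>) :: 'b) = of_nat k * \<epsilon>"
    by (subst norm_of_real) (use epos in simp)
  from this_eq have "norm (evp [:c0 + of_nat k * \<epsilon>, b0, 1:] \<xi>) \<ge> norm (of_real (of_nat k * \<epsilon>) :: 'b) - norm (evp [:c0, b0, 1:] \<xi>)"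
    by (metis add.commute norm_diff_ineq)
  then have "norm (evp [:c0 + of_nat k * \<epsilon>, b0, 1:] \<xi>) \<ge> of_nat k * \<epsilon> - m"
    using q0 nk by linarith
  then show False using k[of k] kk mpos by simp
qed




lemma dist_real_line:
  fixes \<xi> :: "'b::real_normed_field"
  assumes "\<And>t. \<xi> \<noteq> of_real t"
  shows "\<exists>d>0. \<forall>t. d \<le> norm (\<xi> - of_real t)"
proof -
  define N where "N = 2 * norm \<xi> + 1"
  have "continuous_on {-N..N} (\<lambda>t. norm (\<xi> - of_real t))"
    by (intro continuous_intros)
  then obtain t0 where t0: "t0 \<in> {-N..N}" "\<And>t. t \<in> {-N..N} \<Longrightarrow> norm (\<xi> - of_real t0) \<le> norm (\<xi> - of_real t)"
  proof -
    have "{-N..N} \<noteq> {}" using norm_ge_zero[of \<xi>] by (simp add: N_def)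
    from continuous_attains_inf[OF compact_Icc this \<open>continuous_on {-N..N} _\<close>] that
    show ?thesis by blast
  qed
  have g0: "norm (\<xi> - of_real t0) > 0" using assms by simp
  define d where "d = min (norm (\<xi> - of_real t0)) 1"
  have "d \<le> norm (\<xi> - of_real t)" for t
  proof (cases "t \<in> {-N..N}")
    case True then have "norm (\<xi> - of_real t0) \<le> norm (\<xi> - of_real t)" using t0 by blast
    then show ?thesis by (simp add: d_def)
  next
    case False
    then have "\<bar>t\<bar> > N" by auto
    moreover have "\<bar>t\<bar> - norm \<xi> \<le> norm (\<xi> - of_real t)"
      using norm_triangle_ineq2[of "of_real t :: 'b" \<xi>] by (simp add: norm_minus_commute)
    ultimately have "1 \<le> norm (\<xi> - of_real t)" using norm_ge_zero[of \<xi>] unfolding N_def by linarith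
    then show ?thesis by (simp add: d_def)
  qed
  moreover have "d > 0" using g0 by (simp add: d_def)
  ultimately show ?thesis by blast
qed

lemma lin_lower:
  fixes \<xi> :: "'b::real_normed_field"
  assumes "\<forall>t. d \<le> norm (\<xi> - of_real t)"
  shows "\<bar>b\<bar> * d \<le> norm (of_real b * \<xi> + of_real c)"
proof (cases "b = 0")
  case True then show ?thesis by simp
next
  case False
  have "of_real b * \<xi> + of_real c = of_real b * (\<xi> - of_real (- c / b))"
    using False by (simp add: algebra_simps of_real_def)
  then have "norm (of_real b * \<xi> + of_real c) = \<bar>b\<bar> * norm (\<xi> - of_real (- c / b))"
    by (simp only: norm_mult norm_of_real)
  moreover have "d \<le> norm (\<xi> - of_real (- c / b))" using assms by blast
  ultimately show ?thesis by (simp add: mult_left_mono)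
qed

lemma exists_min:
  fixes \<xi> :: "'b::real_normed_field"
  assumes "\<And>t. \<xi> \<noteq> of_real t"
  shows "\<exists>b0 c0. \<forall>b c. norm (evp [:c0, b0, 1:] \<xi>) \<le> norm (evp [:c, b, 1:] \<xi>)"
proof -
  obtain d where d: "d > 0" "\<forall>t. d \<le> norm (\<xi> - of_real t)" using dist_real_line assms by blast
  define A where "A = norm (\<xi> * \<xi>)"
  define B where "B = 2 * A / d"
  define C where "C = 2 * A + B * norm \<xi>"
  define F where "F = (\<lambda>z::real \<times> real. norm (evp [:snd z, fst z, 1:] \<xi>))"
  have Fe: "F z = norm (of_real (snd z) + \<xi> * (of_real (fst z) + \<xi>))" for z
    by (simp add: F_def)
  define K where "K = {-B..B} \<times> {-C..C}"
  have A0: "A \<ge> 0" by (simp add: A_def)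
  have B0: "B \<ge> 0" using A0 d by (simp add: B_def)
  have C0: "C \<ge> 0" using A0 B0 by (simp add: C_def)
  have "continuous_on K F" unfolding Fe[abs_def] by (intro continuous_intros)
  moreover have "compact K" unfolding K_def by (intro compact_Times compact_Icc)
  moreover have "(0, 0) \<in> K" using B0 C0 by (simp add: K_def)
  ultimately obtain z0 where z0: "z0 \<in> K" "\<And>z. z \<in> K \<Longrightarrow> F z0 \<le> F z"
    using continuous_attains_inf[of K F] by blast
  have "F z0 \<le> F z" for z
  proof (cases "F z \<le> A")
    case True
    obtain b c where z: "z = (b, c)" by fastforce
    have eq: "of_real b * \<xi> + of_real c = (of_real c + \<xi> * (of_real b + \<xi>)) - \<xi> * \<xi>"
      by (simp add: algebra_simps)
    have "norm (of_real b * \<xi> + of_real c) \<le> norm (of_real c + \<xi> * (of_real b + \<xi>)) + norm (\<xi> * \<xi>)"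
      unfolding eq by (rule norm_triangle_ineq4)
    then have n2: "norm (of_real b * \<xi> + of_real c) \<le> 2 * A" using True Fe[of z] z A_def by simp
    then have "\<bar>b\<bar> * d \<le> 2 * A" using lin_lower[OF d(2), of b c] by simp
    then have bB: "\<bar>b\<bar> \<le> B" using d by (simp add: B_def field_simps)
    have "of_real c = (of_real b * \<xi> + of_real c) - of_real b * \<xi>" by simp
    then have "norm (of_real c :: 'b) \<le> norm (of_real b * \<xi> + of_real c) + norm (of_real b * \<xi>)"
      by (metis norm_triangle_ineq4)
    also have "\<dots> \<le> 2 * A + B * norm \<xi>"
      using n2 bB mult_right_mono[OF bB norm_ge_zero[of \<xi>]] by (simp add: norm_mult)
    finally have "\<bar>c\<bar> \<le> C" by (simp add: C_def)
    then have "z \<in> K" using bB z by (auto simp: K_def)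
    then show ?thesis using z0 by blast
  next
    case False
    have "F z0 \<le> F (0, 0)" using z0 B0 C0 by (simp add: K_def)
    also have "F (0, 0) = A" by (simp add: Fe A_def)
    finally show ?thesis using False by simp
  qed
  note Fz = this
  show ?thesis
  proof (intro exI allI)
    fix b c
    show "norm (evp [:snd z0, fst z0, 1:] \<xi>) \<le> norm (evp [:c, b, 1:] \<xi>)"
      using Fz[of "(b, c)"] unfolding F_def by simp
  qed
qed


lemma quad_root:
  fixes \<xi> :: "'b::real_normed_field"
  shows "\<exists>b c. \<xi> * \<xi> + of_real b * \<xi> + of_real c = 0"
proof (cases "\<exists>t. \<xi> = of_real t")
  case True
  then obtain t where "\<xi> = of_real t" by blast
  then show ?thesis by (intro exI[of _ "- t"] exI[of _ 0]) simp
next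
  case False
  then obtain b0 c0 where bc: "\<forall>b c. norm (evp [:c0, b0, 1:] \<xi>) \<le> norm (evp [:c, b, 1:] \<xi>)"
    using exists_min by blast
  have "norm (evp [:c0, b0, 1:] \<xi>) = 0"
    by (rule min_zero[of _ \<xi> c0 b0]) (use bc in auto)
  then have "evp [:c0, b0, 1:] \<xi> = 0" by simp
  then have "\<xi> * \<xi> + of_real b0 * \<xi> + of_real c0 = 0" by (simp add: algebra_simps)
  then show ?thesis by blast
qed

lemma sq_eq_sq:
  fixes u v :: "'b::real_normed_field"
  assumes "u * u = v * v"
  shows "u = v \<or> u = - v"
proof -
  have "(u - v) * (u + v) = 0" using assms by (simp add: algebra_simps)
  then show ?thesis by (auto simp: eq_neg_iff_add_eq_0)
qed

lemma real_or_neg_disc: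
  fixes \<xi> :: "'b::real_normed_field"
  shows "(\<exists>t. \<xi> = of_real t) \<or> (\<exists>b D. D < 0 \<and> (\<xi> + of_real b) * (\<xi> + of_real b) = of_real D)"
proof -
  obtain b c where bc: "\<xi> * \<xi> + of_real b * \<xi> + of_real c = 0" using quad_root by blast
  define D where "D = b * b / 4 - c"
  have u: "(\<xi> + of_real (b / 2)) * (\<xi> + of_real (b / 2)) = of_real D"
  proof -
    have e1: "of_real (b/2) * of_real (b/2) = (of_real (b*b/4)::'b)" by (simp flip: of_real_mult)
    have e2: "of_real (b/2) * \<xi> + of_real (b/2) * \<xi> = of_real b * \<xi>"
      by (simp flip: distrib_right of_real_add)
    have e3: "(of_real (b*b/4)::'b) = of_real c + of_real D" by (simp add: D_def flip: of_real_add)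
    have "(\<xi> + of_real (b / 2)) * (\<xi> + of_real (b / 2)) = \<xi> * \<xi> + (of_real (b/2) * \<xi> + of_real (b/2) * \<xi>) + of_real (b/2) * of_real (b/2)"
      by (simp add: algebra_simps)
    also have "\<dots> = (\<xi> * \<xi> + of_real b * \<xi> + of_real c) + of_real D"
      unfolding e1 e2 e3 by (simp add: algebra_simps)
    finally have "(\<xi> + of_real (b / 2)) * (\<xi> + of_real (b / 2)) = (\<xi> * \<xi> + of_real b * \<xi> + of_real c) + of_real D" .
    then show ?thesis using bc by simp
  qed
  show ?thesis
  proof (cases "D < 0")
    case True then show ?thesis using u by blast
  next
    case False
    have "of_real D = (of_real (sqrt D) :: 'b) * of_real (sqrt D)"
      using False by (simp flip: of_real_mult)
    then have "\<xi> + of_real (b / 2) = of_real (sqrt D) \<or> \<xi> + of_real (b / 2) = - of_real (sqrt D)"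
      using sq_eq_sq u by metis
    then have "\<xi> = of_real (sqrt D - b / 2) \<or> \<xi> = of_real (- sqrt D - b / 2)"
      by (auto simp: algebra_simps)
    then show ?thesis by blast
  qed
qed


lemma rat_approx:
  fixes t e :: real
  assumes "e > 0"
  shows "\<exists>r::rat. \<bar>t - of_rat r\<bar> < e"
proof -
  obtain r where "r \<in> \<rat>" "t < r" "r < t + e" using Rats_dense_in_real[of t "t + e"] assms by auto
  then show ?thesis by (metis Rats_cases abs_diff_less_iff add.commute less_diff_eq diff_less_eq
        add_less_imp_less_left less_add_same_cancel1 assms order_less_trans)
qed

lemma field_sep:
  "\<exists>Q::'b::real_normed_field set. countable Q \<and> (\<forall>x. \<forall>e>0. \<exists>q\<in>Q. dist x q < e)"
proof (cases "\<forall>\<xi>::'b. \<exists>t. \<xi> = of_real t")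
  case True
  define Q where "Q = range (\<lambda>r::rat. (of_real (of_rat r) :: 'b))"
  have "\<exists>q\<in>Q. dist x q < e" if epos: "e > 0" for x :: 'b and e
  proof -
    obtain t where t: "x = of_real t" using True by blast
    obtain r where "\<bar>t - of_rat r\<bar> < e" using rat_approx epos by blast
    then have "dist x (of_real (of_rat r)) < e" by (simp add: t dist_of_real dist_real_def)
    then show ?thesis by (auto simp: Q_def)
  qed
  moreover have "countable Q" by (simp add: Q_def)
  ultimately show ?thesis by blast
next
  case False
  then obtain \<xi>0 :: 'b where x0: "\<And>t. \<xi>0 \<noteq> of_real t" by blast
  then obtain b0 D0 where bD: "D0 < 0" "(\<xi>0 + of_real b0) * (\<xi>0 + of_real b0) = of_real D0"
    using real_or_neg_disc by blast
  define j where "j = (\<xi>0 + of_real b0) / of_real (sqrt (- D0))"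
  have sq: "sqrt (- D0) * sqrt (- D0) = - D0" using bD by simp
  have sqn: "(of_real (sqrt (- D0)) :: 'b) \<noteq> 0" using bD by simp
  have "j * j = of_real D0 / (of_real (sqrt (- D0)) * of_real (sqrt (- D0)))"
    unfolding j_def using bD by (simp add: field_simps)
  also have "\<dots> = -1" unfolding of_real_mult[symmetric] sq using bD by (simp add: field_simps)
  finally have jj: "j * j = -1" .
  have nj: "norm j = 1"
  proof -
    have "norm j * norm j = 1" using jj by (metis norm_minus_cancel norm_mult norm_one)
    then show ?thesis by (metis abs_norm_cancel norm_ge_zero real_sqrt_abs2 power2_eq_square real_sqrt_one abs_of_nonneg)
  qed
  have rep: "\<exists>x y. \<xi> = of_real x + of_real y * j" for \<xi> :: 'b
  proof (cases "\<exists>t. \<xi> = of_real t")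
    case True then show ?thesis by (metis add_0_right mult_zero_left of_real_0)
  next
    case False
    then obtain b D where bD': "D < 0" "(\<xi> + of_real b) * (\<xi> + of_real b) = of_real D"
      using real_or_neg_disc by blast
    define v where "v = of_real (sqrt (- D)) * j"
    have "v * v = of_real (sqrt (- D) * sqrt (- D)) * (j * j)" unfolding v_def of_real_mult by (simp only: mult_ac)
    also have "\<dots> = of_real (- D) * (-1)"
    proof -
      have "sqrt (- D) * sqrt (- D) = - D" using bD' by simp
      then show ?thesis by (simp only: jj)
    qed
    also have "\<dots> = of_real D" by simp
    finally have "(\<xi> + of_real b) * (\<xi> + of_real b) = v * v" using bD' by simp
    then have "\<xi> + of_real b = v \<or> \<xi> + of_real b = - v" by (rule sq_eq_sq)
    then show ?thesis
    proof
      assume "\<xi> + of_real b = v"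
      then have "\<xi> = of_real (- b) + of_real (sqrt (- D)) * j"
        unfolding v_def by (metis add_diff_cancel_right' diff_conv_add_uminus add.commute of_real_minus)
      then show ?thesis by blast
    next
      assume "\<xi> + of_real b = - v"
      then have "\<xi> = of_real (- b) + of_real (- sqrt (- D)) * j"
        unfolding v_def by (metis add_diff_cancel_right' diff_conv_add_uminus add.commute of_real_minus mult_minus_left)
      then show ?thesis by blast
    qed
  qed
  define Q where "Q = (\<lambda>(p::rat, q::rat). of_real (of_rat p) + of_real (of_rat q) * j) ` UNIV"
  have "\<exists>q\<in>Q. dist x q < e" if epos: "e > 0" for x :: 'b and e
  proof -
    obtain a c where x: "x = of_real a + of_real c * j" using rep by blast
    obtain p where p: "\<bar>a - of_rat p\<bar> < e / 2" using rat_approx epos by (meson half_gt_zero)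
    obtain q where q: "\<bar>c - of_rat q\<bar> < e / 2" using rat_approx epos by (meson half_gt_zero)
    have "x - (of_real (of_rat p) + of_real (of_rat q) * j) = of_real (a - of_rat p) + of_real (c - of_rat q) * j"
      by (simp add: x algebra_simps)
    then have "dist x (of_real (of_rat p) + of_real (of_rat q) * j) \<le> norm (of_real (a - of_rat p) :: 'b) + norm (of_real (c - of_rat q) * j)"
      unfolding dist_norm by (metis norm_triangle_ineq)
    also have "\<dots> = \<bar>a - of_rat p\<bar> + \<bar>c - of_rat q\<bar>" by (simp only: norm_mult nj norm_of_real mult_1_right)
    finally have "dist x (of_real (of_rat p) + of_real (of_rat q) * j) < e" using p q by simp
    moreover have "of_real (of_rat p) + of_real (of_rat q) * j \<in> Q" unfolding Q_def
      by (rule image_eqI[of _ _ "(p, q)"]) auto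
    ultimately show ?thesis by blast
  qed
  moreover have "countable Q" by (simp add: Q_def)
  ultimately show ?thesis by blast
qed




lemma om_le: "omega1_plus_one om \<Longrightarrow> x \<le> om"
  by (simp add: omega1_plus_one_def)

lemma om_avoid:
  assumes "omega1_plus_one om" "countable U"
  shows "\<exists>y<om. y \<notin> U"
proof (rule ccontr)
  assume "\<not> ?thesis"
  then have "{..<om} \<subseteq> U" by auto
  then have "countable {..<om}" using assms(2) countable_subset by blast
  then show False using assms(1) by (simp add: omega1_plus_one_def)
qed

lemma om_countable_atMost:
  assumes "omega1_plus_one om" "s < om"
  shows "countable {..s}"
proof -
  have "{..s} = insert s {..<s}" by auto
  then show ?thesis using assms by (simp add: omega1_plus_one_def)
qed

lemma om_open_atMost:
  fixes om t :: "'a::{wellorder,linorder_topology}"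
  assumes "omega1_plus_one om"
  shows "open {..t}"
proof (cases "t = om")
  case True
  then have "{..t} = UNIV" using om_le[OF assms] by auto
  then show ?thesis by simp
next
  case False
  then have tl: "t < om" using om_le[OF assms, of t] by simp
  define z where "z = (LEAST z. t < z)"
  have tz: "t < z" unfolding z_def using tl by (rule LeastI)
  have "{..t} = {..<z}"
  proof (intro set_eqI iffI)
    fix x assume "x \<in> {..t}" then show "x \<in> {..<z}" using tz by auto
  next
    fix x assume "x \<in> {..<z}"
    then have "x < z" by simp
    show "x \<in> {..t}"
    proof (rule ccontr)
      assume "x \<notin> {..t}"
      then have "t < x" by auto
      then have "z \<le> x" unfolding z_def by (rule Least_le)
      then show False using \<open>x < z\<close> by simp
    qed
  qed
  then show ?thesis by simp
qed

lemma tail_const: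
  fixes f :: "'a::{wellorder,linorder_topology} \<Rightarrow>\<^sub>C 'b::metric_space"
  assumes om: "omega1_plus_one om"
  shows "\<exists>s<om. \<forall>x>s. f x = f om"
proof -
  obtain y0 where y0: "y0 < om" using om_avoid[OF om, of "{}"] by auto
  have "\<exists>a<om. \<forall>x>a. dist (f x) (f om) < 1 / real (Suc n)" for n :: nat
  proof -
    define S where "S = f -` ball (f om) (1 / real (Suc n))"
    have "open (f -` ball (f om) (1 / real (Suc n)) \<inter> UNIV)"
      using continuous_on_open_vimage[of UNIV "apply_bcontfun f"] by simp
    then have "open S" by (simp add: S_def)
    moreover have "om \<in> S" by (simp add: S_def)
    ultimately obtain b where b: "b < om" "{b<..om} \<subseteq> S" using open_left y0 by blast
    have "dist (f x) (f om) < 1 / real (Suc n)" if "x > b" for x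
    proof -
      have "x \<in> {b<..om}" using that om_le[OF om, of x] by simp
      then have "x \<in> S" using b by blast
      then show ?thesis by (simp add: S_def dist_commute)
    qed
    then show ?thesis using b by blast
  qed
  then have "\<forall>n. \<exists>a. a < om \<and> (\<forall>x>a. dist (f x) (f om) < 1 / real (Suc n))" by blast
  then obtain a where a: "\<And>n. a n < om" "\<And>n x. x > a n \<Longrightarrow> dist (f x) (f om) < 1 / real (Suc n)"
    by metis
  have "countable (\<Union>n. {..a n})" using om_countable_atMost[OF om a(1)] by blast
  then obtain s where s: "s < om" "s \<notin> (\<Union>n. {..a n})" using om_avoid[OF om] by blast
  have "f x = f om" if "x > s" for x
  proof (rule ccontr)
    assume "f x \<noteq> f om"
    then have "dist (f x) (f om) > 0" by simp
    then obtain n where n: "1 / real (Suc n) < dist (f x) (f om)"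
      using reals_Archimedean by (metis inverse_eq_divide)
    have "a n < x" using s that by (meson UN_I atMost_iff iso_tuple_UNIV_I not_less order_less_trans)
    then show False using a(2) n by fastforce
  qed
  then show ?thesis using s by blast
qed

lemma closed_tail:
  shows "closed {f::'a::{wellorder,linorder_topology} \<Rightarrow>\<^sub>C 'b::metric_space. \<forall>x>s. f x = f om}"
proof -
  have ev: "continuous_on UNIV (\<lambda>f::'a \<Rightarrow>\<^sub>C 'b. f x)" for x
    unfolding continuous_on_iff using dist_fun_lt_imp_dist_val_lt by blast
  have "{f::'a \<Rightarrow>\<^sub>C 'b. \<forall>x>s. f x = f om} = (\<Inter>x\<in>{s<..}. {f::'a \<Rightarrow>\<^sub>C 'b. f x = f om})" by auto
  moreover have "closed {f::'a \<Rightarrow>\<^sub>C 'b. f x = f om}" for x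
    by (rule closed_Collect_eq) (use ev in auto)
  ultimately show ?thesis by (simp add: closed_INT)
qed

lemma Ptilde_fix:
  fixes f :: "'a::{wellorder,linorder_topology} \<Rightarrow>\<^sub>C 'b::real_normed_field"
  assumes "\<forall>x>s. f x = f om"
  shows "Ptilde om s f = f"
proof -
  have "(\<lambda>x. if x \<le> s then apply_bcontfun f x else apply_bcontfun f om) = apply_bcontfun f"
    using assms by (auto simp: not_le)
  then show ?thesis unfolding Ptilde_def by (simp add: apply_bcontfun_inverse)
qed

lemma sep_imp:
  fixes X :: "('a::{wellorder,linorder_topology} \<Rightarrow>\<^sub>C 'b::real_normed_field) set"
  assumes om: "omega1_plus_one om" and sep: "separable_set X"
  shows "\<exists>\<sigma><om. X \<subseteq> range (Ptilde om \<sigma>)"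
proof -
  obtain D where D: "countable D" "D \<subseteq> X" "X \<subseteq> closure D" using sep by (auto simp: separable_set_def)
  have "\<forall>f\<in>D. \<exists>s. s < om \<and> (\<forall>x>s. f x = f om)" using tail_const[OF om] by blast
  then obtain sf where sf: "\<And>f. f \<in> D \<Longrightarrow> sf f < om" "\<And>f x. f \<in> D \<Longrightarrow> x > sf f \<Longrightarrow> f x = f om"
    by metis
  have "countable (\<Union>f\<in>D. {..sf f})" using D(1) om_countable_atMost[OF om sf(1)] by blast
  then obtain y where y: "y < om" "y \<notin> (\<Union>f\<in>D. {..sf f})" using om_avoid[OF om] by blast
  have "D \<subseteq> {f::'a \<Rightarrow>\<^sub>C 'b. \<forall>x>y. f x = f om}"
  proof safe
    fix f x assume "f \<in> D" "y < x"
    then have "sf f < x" using y(2) by (meson UN_I atMost_iff not_less order_less_trans)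
    then show "f x = f om" using sf(2) \<open>f \<in> D\<close> by blast
  qed
  then have "closure D \<subseteq> {f::'a \<Rightarrow>\<^sub>C 'b. \<forall>x>y. f x = f om}" using closed_tail by (rule closure_minimal)
  then have "X \<subseteq> {f::'a \<Rightarrow>\<^sub>C 'b. \<forall>x>y. f x = f om}" using D(3) by blast
  then have "X \<subseteq> range (Ptilde om y)"
  proof (intro subsetI)
    fix f assume "X \<subseteq> {f::'a \<Rightarrow>\<^sub>C 'b. \<forall>x>y. f x = f om}" "f \<in> X"
    then have "Ptilde om y f = f" using Ptilde_fix by blast
    then show "f \<in> range (Ptilde om y)" by (metis rangeI)
  qed
  then show ?thesis using y by blast
qed




definition Tf :: "'a::wellorder set \<Rightarrow> 'a \<Rightarrow> 'a" where
  "Tf F x = (LEAST t. t \<in> F \<and> x \<le> t)"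

lemma Tf_props:
  assumes "t \<in> F" "y \<le> t"
  shows "Tf F y \<in> F" "y \<le> Tf F y" "Tf F y \<le> t"
proof -
  have "Tf F y \<in> F \<and> y \<le> Tf F y" unfolding Tf_def by (rule LeastI[of _ t]) (use assms in auto)
  then show "Tf F y \<in> F" "y \<le> Tf F y" by auto
  show "Tf F y \<le> t" unfolding Tf_def by (rule Least_le) (use assms in auto)
qed

lemma step_approx:
  fixes f :: "'a::{wellorder,linorder_topology} \<Rightarrow>\<^sub>C 'b::metric_space"
  assumes e: "e > 0"
  shows "\<exists>F. finite F \<and> F \<subseteq> {..x} \<and> x \<in> F \<and> (\<forall>y\<le>x. dist (f y) (f (Tf F y)) < e)"
proof (induction x rule: less_induct)
  case (less x)
  show ?case
  proof (cases "\<exists>y. y < x")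
    case False
    have "\<forall>y\<le>x. dist (f y) (f (Tf {x} y)) < e"
    proof safe
      fix y assume "y \<le> x"
      then have "y = x" using False by (meson le_less)
      moreover have "Tf {x} x = x" using Tf_props(1)[of x "{x}" x] by simp
      ultimately show "dist (f y) (f (Tf {x} y)) < e" using e by simp
    qed
    then show ?thesis by (intro exI[of _ "{x}"]) auto
  next
    case True
    then obtain y0 where y0: "y0 < x" by blast
    define S where "S = f -` ball (f x) e"
    have "open (f -` ball (f x) e \<inter> UNIV)"
      using continuous_on_open_vimage[of UNIV "apply_bcontfun f"] by simp
    then have "open S" by (simp add: S_def)
    moreover have "x \<in> S" using e by (simp add: S_def)
    ultimately obtain a where a: "a < x" "{a<..x} \<subseteq> S" using open_left y0 by blast
    obtain Fa where Fa: "finite Fa" "Fa \<subseteq> {..a}" "a \<in> Fa" "\<forall>y\<le>a. dist (f y) (f (Tf Fa y)) < e"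
      using less.IH[OF a(1)] by blast
    define F where "F = insert x Fa"
    have "dist (f y) (f (Tf F y)) < e" if "y \<le> x" for y
    proof (cases "y \<le> a")
      case True
      have t1: "Tf Fa y \<in> Fa" "y \<le> Tf Fa y" using Tf_props[OF Fa(3) True] by auto
      then have "Tf Fa y \<le> a" using Fa(2) by auto
      have t2: "Tf F y \<in> F" "Tf F y \<le> Tf Fa y" using Tf_props[of "Tf Fa y" F y] t1 by (auto simp: F_def)
      have "Tf F y = Tf Fa y"
      proof (cases "Tf F y = x")
        case True then show ?thesis using t2 \<open>Tf Fa y \<le> a\<close> a(1) by simp
      next
        case False
        then have "Tf F y \<in> Fa" using t2 by (simp add: F_def)
        moreover have "y \<le> Tf F y" using Tf_props(2)[of "Tf Fa y" F y] t1 by (auto simp: F_def)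
        ultimately have "Tf Fa y \<le> Tf F y" using Tf_props(3) by blast
        then show ?thesis using t2 by simp
      qed
      then show ?thesis using Fa(4) True by simp
    next
      case False
      then have "y \<in> {a<..x}" using that by simp
      then have "dist (f y) (f x) < e" using a(2) by (auto simp: S_def dist_commute)
      have t: "Tf F y \<in> F" "y \<le> Tf F y" "Tf F y \<le> x" using Tf_props[of x F y] that by (auto simp: F_def)
      have "Tf F y = x"
      proof (rule ccontr)
        assume "Tf F y \<noteq> x"
        then have "Tf F y \<in> Fa" using t by (simp add: F_def)
        then have "Tf F y \<le> a" using Fa(2) by auto
        then show False using t(2) False by simp
      qed
      then show ?thesis using \<open>dist (f y) (f x) < e\<close> by simp
    qed
    moreover have "finite F" "F \<subseteq> {..x}" "x \<in> F" using Fa a by (auto simp: F_def)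
    ultimately show ?thesis by blast
  qed
qed


lemma loc_const_cont:
  fixes h :: "'a::{wellorder,linorder_topology} \<Rightarrow> 'b::metric_space"
  assumes "\<And>x. \<exists>N. open N \<and> x \<in> N \<and> (\<forall>y\<in>N. h y = h x)"
  shows "continuous_on UNIV h"
proof -
  have "isCont h x" for x
  proof -
    obtain N where N: "open N" "x \<in> N" "\<forall>y\<in>N. h y = h x" using assms by blast
    have "\<forall>\<^sub>F y in nhds x. h y = h x" unfolding eventually_nhds using N by blast
    then have "(h \<longlongrightarrow> h x) (nhds x)" by (rule tendsto_eventually)
    moreover have "at x \<le> nhds x" unfolding at_within_def by (rule inf_le1)
    ultimately show ?thesis unfolding isCont_def by (rule tendsto_mono[rotated])
  qed
  then show ?thesis by (simp add: continuous_on_eq_continuous_at)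
qed

lemma Tf_loc_const:
  fixes om :: "'a::{wellorder,linorder_topology}"
  assumes om: "omega1_plus_one om" and F: "finite F" "om \<in> F"
  shows "\<exists>N. open N \<and> x \<in> N \<and> (\<forall>y\<in>N. Tf F y = Tf F x)"
proof -
  define t where "t = Tf F x"
  have t: "t \<in> F" "x \<le> t" using Tf_props[OF F(2) om_le[OF om, of x]] by (auto simp: t_def)
  define N where "N = {..t} \<inter> (\<Inter>s\<in>{s\<in>F. s < x}. {s<..})"
  have "open N" unfolding N_def using F(1) om_open_atMost[OF om, of t]
    by (intro open_Int open_INT) auto
  moreover have "x \<in> N" using t by (auto simp: N_def)
  moreover have "Tf F y = t" if "y \<in> N" for y
  proof -
    have y: "y \<le> t" "\<forall>s\<in>F. s < x \<longrightarrow> s < y" using that by (auto simp: N_def)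
    have u: "Tf F y \<in> F" "y \<le> Tf F y" "Tf F y \<le> t" using Tf_props[OF t(1) y(1)] by auto
    have "x \<le> Tf F y"
    proof (rule ccontr)
      assume "\<not> x \<le> Tf F y"
      then have "Tf F y < y" using y(2) u(1) by auto
      then show False using u(2) by simp
    qed
    then have "t \<le> Tf F y" unfolding t_def using Tf_props(3)[OF u(1)] by blast
    then show ?thesis using u by simp
  qed
  ultimately show ?thesis unfolding t_def by blast
qed

definition gL :: "'a::wellorder \<Rightarrow> ('a \<times> 'b::zero) list \<Rightarrow> 'a \<Rightarrow> 'b" where
  "gL om L x = (case map_of L (Tf (insert om (fst ` set L)) x) of None \<Rightarrow> 0 | Some v \<Rightarrow> v)"

lemma approx_tail:
  fixes f :: "'a::{wellorder,linorder_topology} \<Rightarrow>\<^sub>C 'b::real_normed_field"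
    and om \<sigma> :: 'a and Q :: "'b set"
  assumes om: "omega1_plus_one om" and ft: "\<forall>x. \<sigma> < x \<longrightarrow> apply_bcontfun f x = apply_bcontfun f om"
    and Qd: "\<forall>x. \<forall>e>0. \<exists>q\<in>Q. dist x q < e" and e: "e > 0"
  shows "\<exists>L\<in>lists (insert om {..\<sigma>} \<times> Q). dist f (Bcontfun (gL om L)) < e"
proof -
  have e4: "e / 4 > 0" using e by simp
  obtain F where F: "finite F" "om \<in> F" "\<forall>y\<le>om. dist (f y) (f (Tf F y)) < e / 4"
    using step_approx[OF e4, where f=f and x=om] by blast
  define F' where "F' = insert om {t\<in>F. t \<le> \<sigma>}"
  have F'f: "finite F'" "om \<in> F'" using F by (auto simp: F'_def)
  have F'ok: "dist (f y) (f (Tf F' y)) < e / 4" for y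
  proof -
    define t where "t = Tf F y"
    have t: "t \<in> F" "y \<le> t" using Tf_props[OF F(2) om_le[OF om, of y]] by (auto simp: t_def)
    have u: "Tf F' y \<in> F'" "y \<le> Tf F' y" using Tf_props[OF F'f(2) om_le[OF om, of y]] by auto
    have "f (Tf F' y) = f t"
    proof (cases "t \<le> \<sigma>")
      case True
      then have "t \<in> F'" using t by (simp add: F'_def)
      then have "Tf F' y \<le> t" using Tf_props(3) t(2) by blast
      moreover have "Tf F' y \<in> F" using u F(2) by (auto simp: F'_def)
      then have "t \<le> Tf F' y" unfolding t_def using Tf_props(3) u(2) by blast
      ultimately show ?thesis by simp
    next
      case False
      have "Tf F' y = om"
      proof (rule ccontr)
        assume "Tf F' y \<noteq> om"
        then have "Tf F' y \<in> F" "Tf F' y \<le> \<sigma>" using u by (auto simp: F'_def)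
        then have "t \<le> Tf F' y" unfolding t_def using Tf_props(3) u(2) by blast
        then show False using False \<open>Tf F' y \<le> \<sigma>\<close> by simp
      qed
      then show ?thesis using ft False by simp
    qed
    then show ?thesis using F(3) om_le[OF om, of y] by (simp add: t_def)
  qed
  have "\<forall>t. \<exists>q. q \<in> Q \<and> dist (f t) q < e / 4" using Qd e4 by blast
  then obtain v where v: "\<And>t. v t \<in> Q" "\<And>t. dist (f t) (v t) < e / 4" by metis
  obtain xs where xs: "set xs = F'" using finite_list[OF F'f(1)] by blast
  define L where "L = map (\<lambda>t. (t, v t)) xs"
  have "fst ` set L = F'" by (simp add: L_def xs image_image)
  then have fstL: "insert om (fst ` set L) = F'" using F'f(2) by auto
  have mapL: "map_of L t = Some (v t)" if "t \<in> F'" for t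
    using that by (simp add: L_def map_of_map_restrict xs)
  have gLe: "gL om L y = v (Tf F' y)" for y
  proof -
    have "Tf F' y \<in> F'" using Tf_props(1)[OF F'f(2) om_le[OF om, of y]] .
    then show ?thesis unfolding gL_def fstL by (simp add: mapL)
  qed
  have cont: "continuous_on UNIV (gL om L)"
  proof (rule loc_const_cont)
    fix x
    obtain N where N: "open N" "x \<in> N" "\<forall>y\<in>N. Tf F' y = Tf F' x" using Tf_loc_const[OF om F'f] by blast
    have "\<forall>y\<in>N. gL om L y = gL om L x" unfolding gLe using N(3) by metis
    then show "\<exists>N. open N \<and> x \<in> N \<and> (\<forall>y\<in>N. gL om L y = gL om L x)" using N by blast
  qed
  have "range (gL om L) \<subseteq> v ` F'"
    using Tf_props(1)[OF F'f(2) om_le[OF om]] by (auto simp: gLe)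
  then have "bounded (range (gL om L))" using F'f(1) by (meson bounded_subset finite_imageI finite_imp_bounded)
  then have inb: "gL om L \<in> bcontfun" using cont by (simp add: bcontfun_def)
  have "dist f (Bcontfun (gL om L)) \<le> e / 2"
  proof (rule dist_bound)
    fix y
    have "dist (f y) (gL om L y) \<le> dist (f y) (f (Tf F' y)) + dist (f (Tf F' y)) (v (Tf F' y))"
      unfolding gLe by (rule dist_triangle)
    also have "\<dots> \<le> e / 2" using F'ok[of y] v(2)[of "Tf F' y"] by simp
    finally show "dist (f y) (Bcontfun (gL om L) y) \<le> e / 2" using inb by (simp add: Bcontfun_inverse)
  qed
  then have "dist f (Bcontfun (gL om L)) < e" using e by simp
  moreover have "L \<in> lists (insert om {..\<sigma>} \<times> Q)"
  proof -
    have "F' \<subseteq> insert om {..\<sigma>}" by (auto simp: F'_def)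
    then show ?thesis using v(1) xs by (auto simp: L_def)
  qed
  ultimately show ?thesis by blast
qed


lemma range_tail:
  fixes g :: "'a::{wellorder,linorder_topology} \<Rightarrow>\<^sub>C 'b::real_normed_field"
  assumes om: "omega1_plus_one om" and s: "\<sigma> < om" and g: "g \<in> range (Ptilde om \<sigma>)"
  shows "\<forall>x. \<sigma> < x \<longrightarrow> apply_bcontfun g x = apply_bcontfun g om"
proof -
  obtain f where gf: "g = Ptilde om \<sigma> f" using g by blast
  define h where "h = (\<lambda>x. if x \<le> \<sigma> then apply_bcontfun f x else apply_bcontfun f om)"
  have "continuous_on ({..\<sigma>} \<union> {\<sigma><..}) h"
  proof (rule continuous_on_open_Un)
    show "open {..\<sigma>}" by (rule om_open_atMost[OF om])
    show "open {\<sigma><..}" by simp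
    show "continuous_on {..\<sigma>} h"
      by (rule continuous_on_cong[THEN iffD1, OF refl _ continuous_on_apply_bcontfun[of _ f]]) (auto simp: h_def)
    show "continuous_on {\<sigma><..} h"
      by (rule continuous_on_cong[THEN iffD1, OF refl _ continuous_on_const[of _ "apply_bcontfun f om"]]) (auto simp: h_def)
  qed
  moreover have "{..\<sigma>} \<union> {\<sigma><..} = UNIV" by auto
  ultimately have "continuous_on UNIV h" by simp
  moreover have "norm (h x) \<le> norm f" for x by (simp add: h_def norm_bounded)
  ultimately have "h \<in> bcontfun" by (rule bcontfun_normI)
  then have "apply_bcontfun g = h" unfolding gf Ptilde_def h_def[symmetric] by (simp add: Bcontfun_inverse)
  then show ?thesis using s by (auto simp: h_def)
qed

lemma sep_subset:
  fixes X Y :: "'c::metric_space set"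
  assumes "countable D0" "\<forall>f\<in>Y. \<forall>e>0. \<exists>g\<in>D0. dist f g < e" "X \<subseteq> Y"
  shows "separable_set X"
proof -
  define P where "P = (\<lambda>d (n::nat) x. x \<in> X \<and> dist x d < 1 / real (Suc n))"
  define c where "c = (\<lambda>(d, n). SOME x. P d n x)"
  define I where "I = {(d, n). d \<in> D0 \<and> (\<exists>x. P d n x)}"
  have cP: "P d n (c (d, n))" if "(d, n) \<in> I" for d n
    using that unfolding I_def c_def by (auto intro: someI_ex)
  define D where "D = c ` I"
  have "I \<subseteq> D0 \<times> UNIV" by (auto simp: I_def)
  moreover have "countable (D0 \<times> (UNIV :: nat set))" using assms(1) by simp
  ultimately have "countable I" by (rule countable_subset)
  then have "countable D" by (simp add: D_def)
  moreover have "D \<subseteq> X" using cP by (auto simp: D_def P_def)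
  moreover have "X \<subseteq> closure D"
  proof
    fix x assume x: "x \<in> X"
    show "x \<in> closure D" unfolding closure_approachable
    proof (intro allI impI)
      fix e :: real assume e: "e > 0"
      obtain n where n: "1 / real (Suc n) < e / 2" using reals_Archimedean[of "e / 2"] e
        by (auto simp: inverse_eq_divide)
      obtain d where d: "d \<in> D0" "dist x d < 1 / real (Suc n)"
        using assms(2,3) x by (meson of_nat_0_less_iff subsetD zero_less_Suc divide_pos_pos zero_less_one)
      then have "(d, n) \<in> I" unfolding I_def P_def using x by blast
      then have "P d n (c (d, n))" by (rule cP)
      then have "dist (c (d, n)) d < 1 / real (Suc n)" by (simp add: P_def)
      then have "dist (c (d, n)) x < e" using d n dist_triangle3[of "c (d, n)" x d] dist_commute[of d "c (d, n)"] dist_commute[of d x] by linarith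
      moreover have "c (d, n) \<in> D" using \<open>(d, n) \<in> I\<close> by (simp add: D_def)
      ultimately show "\<exists>y\<in>D. dist y x < e" by blast
    qed
  qed
  ultimately show ?thesis unfolding separable_set_def by blast
qed

theorem lemma4p2:
  fixes om :: "'a::{wellorder,linorder_topology}"
    and X :: "('a \<Rightarrow>\<^sub>C 'b::real_normed_field) set"
  assumes "omega1_plus_one om"
    and "subspace X" and "closed X"
  shows "separable_set X \<longleftrightarrow> (\<exists>\<sigma><om. X \<subseteq> range (Ptilde om \<sigma>))"
proof
  assume "separable_set X"
  then show "\<exists>\<sigma><om. X \<subseteq> range (Ptilde om \<sigma>)" using sep_imp assms(1) by blast
next
  assume "\<exists>\<sigma><om. X \<subseteq> range (Ptilde om \<sigma>)"
  then obtain \<sigma> where s: "\<sigma> < om" "X \<subseteq> range (Ptilde om \<sigma>)" by blast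
  obtain Q :: "'b set" where Q: "countable Q" "\<forall>x. \<forall>e>0. \<exists>q\<in>Q. dist x q < e" using field_sep by blast
  define Y where "Y = {f::'a \<Rightarrow>\<^sub>C 'b. \<forall>x. \<sigma> < x \<longrightarrow> apply_bcontfun f x = apply_bcontfun f om}"
  define D0 where "D0 = (\<lambda>L. Bcontfun (gL om L)) ` lists (insert om {..\<sigma>} \<times> Q)"
  have "countable (insert om {..\<sigma>})" using om_countable_atMost[OF assms(1) s(1)] by simp
  then have "countable D0" unfolding D0_def using Q(1) by (intro countable_image countable_lists countable_SIGMA) auto
  moreover have "\<forall>f\<in>Y. \<forall>e>0. \<exists>g\<in>D0. dist f g < e"
  proof (intro ballI allI impI)
    fix f e assume "f \<in> Y" "(e::real) > 0"
    then obtain L where "L \<in> lists (insert om {..\<sigma>} \<times> Q)" "dist f (Bcontfun (gL om L)) < e"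
      using approx_tail[OF assms(1) _ Q(2)] unfolding Y_def by blast
    then show "\<exists>g\<in>D0. dist f g < e" unfolding D0_def by blast
  qed
  moreover have "X \<subseteq> Y" using s range_tail[OF assms(1) s(1)] unfolding Y_def by blast
  ultimately show "separable_set X" by (rule sep_subset)
qed


end
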